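(* For the discrete torus calculus and diagonal zweibein of the context, the antisymmetrizer $\pi=\frac12(\mathrm{id}-\tau)$ satisfies conditions (i) and (ii) (and hence defines 2-forms with $\mathrm{d}^2=0$) if and only if $\Theta_1\,R_1(\Theta_2)=\Theta_2\,R_2(\Theta_1)$, i.e. $\Theta_1\bar\partial^1\Theta_2=\Theta_2\bar\partial^2\Theta_1$.
   Context: $\Sigma=\mathbb{Z}_2\times\mathbb{Z}_2$, $x\to y$ iff $y-x\in\{(1,0),(0,1)\}$ (square connectivity), $n=2$, diagonal zweibein $e_{1,x,x+(1,0)}=\Theta_1(x)^{-1}$, $e_{2,x,x+(0,1)}=\Theta_2(x)^{-1}$ with $\Theta_a$ nowhere-vanishing, other entries $0$; inverses $e_1^{-1\,x,x+(1,0)}=\Theta_1(x)$, $e_2^{-1\,x,x+(0,1)}=\Theta_2(x)$. $R_1f(x)=f(x+(1,0))$, $R_2f(x)=f(x+(0,1))$, $\bar\partial^a=R_a-\mathrm{id}$. $F_{x,z}=\{y:x\to y\to z\}$. For $\pi(e_a\otimes e_b)=\sum\pi_{ab}{}^{cd}e_c\otimes e_d$ let $\pi_{x,z}{}^y{}_{y'}=\sum\pi_{ab}{}^{cd}e_a^{-1\,xy}e_b^{-1\,yz}e_{cxy'}e_{dy'z}$. Conditions: (i) $\sum\pi_{ab}{}^{cd}e_a^{-1\,xy}e_b^{-1\,yz}e_{cxy'}e_{dy'z'}=0$ for all $x$, $z\ne z'$, $y\in F_{x,z}$, $y'\in F_{x,z'}$; (ii) $\sum_{y\in F_{x,z}}\pi_{x,z}{}^y{}_{y'}=0$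 for all $(x,z)$ that are neither edges nor diagonal and all $y'\in F_{x,z}$. $\tau$ is the flip $e_a\otimes e_b\mapsto e_b\otimes e_a$. *)

theory Defs
  imports Main "HOL-Library.Numeral_Type" "HOL-Library.Product_Plus"
begin

type_synonym pt = "2 \<times> 2"

definition edge :: "pt \<Rightarrow> pt \<Rightarrow> bool" where
  "edge x y \<longleftrightarrow> y - x \<in> {(1,0), (0,1)}"

definition Fset :: "pt \<Rightarrow> pt \<Rightarrow> pt set" where
  "Fset x z = {y. edge x y \<and> edge y z}"

definition zb :: "(pt \<Rightarrow> 'a::field) \<Rightarrow> (pt \<Rightarrow> 'a) \<Rightarrow> nat \<Rightarrow> pt \<Rightarrow> pt \<Rightarrow> 'a" where
  "zb T1 T2 a x y =
     (if a = 1 \<and> y = x + (1,0) then inverse (T1 x)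
      else if a = 2 \<and> y = x + (0,1) then inverse (T2 x) else 0)"

definition zbinv :: "(pt \<Rightarrow> 'a::field) \<Rightarrow> (pt \<Rightarrow> 'a) \<Rightarrow> nat \<Rightarrow> pt \<Rightarrow> pt \<Rightarrow> 'a" where
  "zbinv T1 T2 a x y =
     (if a = 1 \<and> y = x + (1,0) then T1 x
      else if a = 2 \<and> y = x + (0,1) then T2 x else 0)"

definition piterm :: "(pt \<Rightarrow> 'a::field) \<Rightarrow> (pt \<Rightarrow> 'a) \<Rightarrow> (nat \<Rightarrow> nat \<Rightarrow> nat \<Rightarrow> nat \<Rightarrow> 'a)
    \<Rightarrow> pt \<Rightarrow> pt \<Rightarrow> pt \<Rightarrow> pt \<Rightarrow> pt \<Rightarrow> 'a" where
  "piterm T1 T2 P x y z y' z' =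
     (\<Sum>a\<in>{1,2}. \<Sum>b\<in>{1,2}. \<Sum>c\<in>{1,2}. \<Sum>d\<in>{1,2}.
        P a b c d * zbinv T1 T2 a x y * zbinv T1 T2 b y z * zb T1 T2 c x y' * zb T1 T2 d y' z')"

definition cond_i :: "(pt \<Rightarrow> 'a::field) \<Rightarrow> (pt \<Rightarrow> 'a) \<Rightarrow> (nat \<Rightarrow> nat \<Rightarrow> nat \<Rightarrow> nat \<Rightarrow> 'a) \<Rightarrow> bool" where
  "cond_i T1 T2 P \<longleftrightarrow>
     (\<forall>x z z'. z \<noteq> z' \<longrightarrow> (\<forall>y\<in>Fset x z. \<forall>y'\<in>Fset x z'. piterm T1 T2 P x y z y' z' = 0))"

definition cond_ii :: "(pt \<Rightarrow> 'a::field) \<Rightarrow> (pt \<Rightarrow> 'a) \<Rightarrow> (nat \<Rightarrow> nat \<Rightarrow> nat \<Rightarrow> nat \<Rightarrow> 'a) \<Rightarrow> bool" where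
  "cond_ii T1 T2 P \<longleftrightarrow>
     (\<forall>x z. \<not> edge x z \<and> x \<noteq> z \<longrightarrow>
        (\<forall>y'\<in>Fset x z. (\<Sum>y\<in>Fset x z. piterm T1 T2 P x y z y' z) = 0))"

text \<open>Antisymmetrizer pi = 1/2 (id - tau): pi(e_a (x) e_b) = 1/2 (e_a (x) e_b - e_b (x) e_a).\<close>
definition antisymmetrizer :: "nat \<Rightarrow> nat \<Rightarrow> nat \<Rightarrow> nat \<Rightarrow> 'a::field" where
  "antisymmetrizer a b c d =
     (1/2) * ((if a = c \<and> b = d then 1 else 0) - (if a = d \<and> b = c then 1 else 0))"

end

theory Submission
  imports Defs
begin

lemma one_one: "(1::2) + 1 = 0" by simp
lemma edge_iff: "edge x y \<longleftrightarrow> y = x + (1,0) \<or> y = x + (0,1)"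
  unfolding edge_def by (auto simp: algebra_simps)
lemma Fset_eq: "Fset x z = (if z = x \<or> z = x + (1,1) then {x+(1,0), x+(0,1)} else {})"
proof -
  obtain p q where x: "x = (p,q)" by fastforce
  show ?thesis unfolding Fset_def edge_iff x
    by (auto simp: add.assoc one_one)
qed
lemma ci: "cond_i T1 T2 (antisymmetrizer :: nat \<Rightarrow> nat \<Rightarrow> nat \<Rightarrow> nat \<Rightarrow> 'a::field_char_0)"
  unfolding cond_i_def
proof (intro allI impI ballI)
  fix x z z' y y' assume "z \<noteq> z'" "y \<in> Fset x z" "y' \<in> Fset x z'"
  moreover obtain p q where x: "x = (p,q)" by fastforce
  ultimately show "piterm T1 T2 antisymmetrizer x y z y' z' = 0"
    unfolding Fset_eq x
    by (auto simp: piterm_def zb_def zbinv_def antisymmetrizer_def add.assoc one_one split: if_splits)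
qed
lemma sum1:
  fixes T1 T2 :: "pt \<Rightarrow> 'a::field_char_0"
  shows "(\<Sum>y\<in>Fset (p,q) ((p,q)+(1,1)). piterm T1 T2 antisymmetrizer (p,q) y ((p,q)+(1,1)) ((p,q)+(1,0)) ((p,q)+(1,1)))
     = (1/2) * (T1 (p,q) * T2 (p+1,q) - T2 (p,q) * T1 (p,q+1)) * inverse (T1 (p,q)) * inverse (T2 (p+1,q))"
  unfolding Fset_eq
  by (simp add: piterm_def zb_def zbinv_def antisymmetrizer_def add.assoc one_one algebra_simps)
lemma sum2:
  fixes T1 T2 :: "pt \<Rightarrow> 'a::field_char_0"
  shows "(\<Sum>y\<in>Fset (p,q) ((p,q)+(1,1)). piterm T1 T2 antisymmetrizer (p,q) y ((p,q)+(1,1)) ((p,q)+(0,1)) ((p,q)+(1,1)))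
     = (1/2) * (T2 (p,q) * T1 (p,q+1) - T1 (p,q) * T2 (p+1,q)) * inverse (T2 (p,q)) * inverse (T1 (p,q+1))"
  unfolding Fset_eq
  by (simp add: piterm_def zb_def zbinv_def antisymmetrizer_def add.assoc one_one algebra_simps)
lemma not_edge: "\<not> edge x (x + (1,1))" "x + (1,1) \<noteq> x"
proof -
  obtain p q where x: "x = (p,q)" by fastforce
  show "\<not> edge x (x + (1,1))" "x + (1,1) \<noteq> x" unfolding edge_iff x by auto
qed
theorem mainTheorem10:
  fixes T1 T2 :: "pt \<Rightarrow> 'a::field_char_0"
  assumes "\<forall>x. T1 x \<noteq> 0" and "\<forall>x. T2 x \<noteq> 0"
  shows "(cond_i T1 T2 antisymmetrizer \<and> cond_ii T1 T2 antisymmetrizer) \<longleftrightarrow>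
         (\<forall>x. T1 x * T2 (x + (1,0)) = T2 x * T1 (x + (0,1)))"
proof
  assume h: "cond_i T1 T2 antisymmetrizer \<and> cond_ii T1 T2 antisymmetrizer"
  show "\<forall>x. T1 x * T2 (x + (1,0)) = T2 x * T1 (x + (0,1))"
  proof
    fix x :: pt
    obtain p q where x: "x = (p,q)" by fastforce
    have "x + (1,0) \<in> Fset x (x + (1,1))" unfolding Fset_eq by simp
    then have "(\<Sum>y\<in>Fset x (x+(1,1)). piterm T1 T2 antisymmetrizer x y (x+(1,1)) (x+(1,0)) (x+(1,1))) = 0"
    proof -
      have "\<not> edge x (x + (1,1)) \<and> x \<noteq> x + (1,1)" using not_edge[of x] by metis
      then show ?thesis using h \<open>x + (1,0) \<in> Fset x (x + (1,1))\<close> unfolding cond_ii_def by blast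
    qed
    then have "(1/2) * (T1 (p,q) * T2 (p+1,q) - T2 (p,q) * T1 (p,q+1)) * inverse (T1 (p,q)) * inverse (T2 (p+1,q)) = (0::'a)"
      unfolding x sum1 .
    then show "T1 x * T2 (x + (1,0)) = T2 x * T1 (x + (0,1))"
      using assms unfolding x by simp
  qed
next
  assume h: "\<forall>x. T1 x * T2 (x + (1,0)) = T2 x * T1 (x + (0,1))"
  show "cond_i T1 T2 antisymmetrizer \<and> cond_ii T1 T2 antisymmetrizer"
  proof
    show "cond_i T1 T2 antisymmetrizer" by (rule ci)
    show "cond_ii T1 T2 antisymmetrizer"
      unfolding cond_ii_def
    proof (intro allI impI ballI)
      fix x z y' assume nz: "\<not> edge x z \<and> x \<noteq> z" and y': "y' \<in> Fset x z"
      obtain p q where x: "x = (p,q)" by fastforce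
      have e: "T1 (p,q) * T2 (p+1,q) = T2 (p,q) * T1 (p,q+1)" using h[rule_format, of x] unfolding x by simp
      have z: "z = x + (1,1)" using nz y' unfolding Fset_eq by (auto split: if_splits)
      have "y' = x + (1,0) \<or> y' = x + (0,1)" using y' unfolding Fset_eq by (auto split: if_splits)
      then show "(\<Sum>y\<in>Fset x z. piterm T1 T2 antisymmetrizer x y z y' z) = 0"
      proof
        assume "y' = x + (1,0)"
        then have yy: "y' = (p,q) + (1,0)" unfolding x .
        have zz: "z = (p,q) + (1,1)" unfolding z x ..
        show ?thesis using sum1[of T1 T2 p q] e by (simp add: yy zz x)
      next
        assume "y' = x + (0,1)"
        then have yy: "y' = (p,q) + (0,1)" unfolding x .
        have zz: "z = (p,q) + (1,1)" unfolding z x ..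
        show ?thesis using sum2[of T1 T2 p q] e by (simp add: yy zz x)
      qed
    qed
  qed
qed

end
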